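(* Let $G$ be a directed $st$-graph that does not contain a subgraph homeomorphic to the Wheatstone graph $W$, and let $C$ be a simple directed cycle in $G$. Then some edge $e$ of $C$ can be removed so that the resulting graph $G'=(V,E\setminus\{e\},s,t)$ satisfies $\mathrm{Path}_A(G')=\mathrm{Path}_A(G)$.
   Context: A directed $st$-graph $G=(V,E,s,t)$ is a finite directed graph with no self-loops and no parallel edges, with distinct source $s$ (no incoming edges) and sink $t$ (no outgoing edges), such that every vertex lies on some directed walk from $s$ to $t$. $\mathrm{Path}_A(G)$ is the set of acyclic (simple) directed paths from $s$ to $t$ in $G$. The Wheatstone graph $W$ has vertices $s,u,v,t$ and edges $s\to u$, $s\to v$, $u\to v$, $u\to t$, $v\to t$. $G$ contains a subgraph homeomorphic to $W$ if there are distinct vertices $s',u',v',t'$ of $G$ and directed paths $s'\leadsto u'$, $s'\leadsto v'$, $u'\leadsto v'$, $u'\leadsto t'$, $v'\leadsto t'$ that pairwise share no vertices other than common endpoints. *)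

theory Defs
  imports Main
begin

text \<open>Directed graphs are given by a vertex set V and an edge relation E of ordered pairs
(so parallel edges are excluded by construction).\<close>

definition st_graph :: "'a set \<Rightarrow> ('a \<times> 'a) set \<Rightarrow> 'a \<Rightarrow> 'a \<Rightarrow> bool" where
  "st_graph V E s t \<longleftrightarrow>
     finite V \<and> E \<subseteq> V \<times> V \<and> (\<forall>u. (u, u) \<notin> E) \<and>
     s \<in> V \<and> t \<in> V \<and> s \<noteq> t \<and>
     (\<forall>u. (u, s) \<notin> E) \<and> (\<forall>u. (t, u) \<notin> E) \<and>
     (\<forall>v\<in>V. (s, v) \<in> E\<^sup>* \<and> (v, t) \<in> E\<^sup>*)"

fun is_walk :: "('a \<times> 'a) set \<Rightarrow> 'a list \<Rightarrow> bool" where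
  "is_walk E [] = False"
| "is_walk E [v] = True"
| "is_walk E (u # v # vs) = ((u, v) \<in> E \<and> is_walk E (v # vs))"

definition is_path :: "('a \<times> 'a) set \<Rightarrow> 'a \<Rightarrow> 'a \<Rightarrow> 'a list \<Rightarrow> bool" where
  "is_path E x y p \<longleftrightarrow> is_walk E p \<and> distinct p \<and> hd p = x \<and> last p = y"

definition PathA :: "('a \<times> 'a) set \<Rightarrow> 'a \<Rightarrow> 'a \<Rightarrow> 'a list set" where
  "PathA E s t = {p. is_path E s t p}"

definition simple_cycle :: "('a \<times> 'a) set \<Rightarrow> 'a list \<Rightarrow> bool" where
  "simple_cycle E c \<longleftrightarrow> length c \<ge> 2 \<and> distinct c \<and>
     (\<forall>i < length c. (c ! i, c ! (Suc i mod length c)) \<in> E)"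

definition cycle_edges :: "'a list \<Rightarrow> ('a \<times> 'a) set" where
  "cycle_edges c = {(c ! i, c ! (Suc i mod length c)) | i. i < length c}"

definition endpoints :: "'a list \<Rightarrow> 'a set" where
  "endpoints p = {hd p, last p}"

definition contains_wheatstone :: "'a set \<Rightarrow> ('a \<times> 'a) set \<Rightarrow> bool" where
  "contains_wheatstone V E \<longleftrightarrow>
    (\<exists>s' u' v' t' P1 P2 P3 P4 P5.
       s' \<in> V \<and> u' \<in> V \<and> v' \<in> V \<and> t' \<in> V \<and> distinct [s', u', v', t'] \<and>
       is_path E s' u' P1 \<and> is_path E s' v' P2 \<and> is_path E u' v' P3 \<and>
       is_path E u' t' P4 \<and> is_path E v' t' P5 \<and>
       (\<forall>P\<in>{P1, P2, P3, P4, P5}. \<forall>Q\<in>{P1, P2, P3, P4, P5}. P \<noteq> Q \<longrightarrow>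
          set P \<inter> set Q \<subseteq> endpoints P \<inter> endpoints Q))"

end

theory Submission
  imports Defs
begin


lemma is_walk_nth: "is_walk E xs \<longleftrightarrow> xs \<noteq> [] \<and> (\<forall>k. Suc k < length xs \<longrightarrow> (xs!k, xs!Suc k) \<in> E)"
proof (induction E xs rule: is_walk.induct)
  case (3 E u v vs)
  have "(\<forall>k. Suc k < length (u#v#vs) \<longrightarrow> ((u#v#vs)!k, (u#v#vs)!Suc k) \<in> E) \<longleftrightarrow>
        (u,v) \<in> E \<and> (\<forall>k. Suc k < length (v#vs) \<longrightarrow> ((v#vs)!k, (v#vs)!Suc k) \<in> E)"
    (is "?L \<longleftrightarrow> ?R")
  proof
    assume L: ?L
    show ?R
    proof (intro conjI allI impI)
      show "(u,v) \<in> E" using L[rule_format, of 0] by simp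
    next
      fix k assume "Suc k < length (v#vs)"
      then show "((v#vs)!k, (v#vs)!Suc k) \<in> E" using L[rule_format, of "Suc k"] by simp
    qed
  next
    assume R: ?R
    show ?L
    proof (intro allI impI)
      fix k assume k: "Suc k < length (u#v#vs)"
      show "((u#v#vs)!k, (u#v#vs)!Suc k) \<in> E"
      proof (cases k)
        case 0 then show ?thesis using R by simp
      next
        case (Suc k') then show ?thesis using R k by simp
      qed
    qed
  qed
  then show ?case using 3 by simp
qed auto

definition sl :: "'a list \<Rightarrow> nat \<Rightarrow> nat \<Rightarrow> 'a list" where
  "sl xs i j = take (Suc j - i) (drop i xs)"

lemma sl_length: "i \<le> j \<Longrightarrow> j < length xs \<Longrightarrow> length (sl xs i j) = Suc j - i"
  by (simp add: sl_def)

lemma sl_nth: "i \<le> j \<Longrightarrow> j < length xs \<Longrightarrow> k < Suc j - i \<Longrightarrow> sl xs i j ! k = xs ! (i + k)"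
  by (simp add: sl_def)

lemma sl_set: "i \<le> j \<Longrightarrow> j < length xs \<Longrightarrow> set (sl xs i j) = (\<lambda>k. xs!k) ` {i..j}"
proof -
  assume a: "i \<le> j" "j < length xs"
  show ?thesis
  proof
    show "set (sl xs i j) \<subseteq> (\<lambda>k. xs!k) ` {i..j}"
    proof
      fix v assume "v \<in> set (sl xs i j)"
      then obtain k where "k < length (sl xs i j)" "sl xs i j ! k = v" by (metis in_set_conv_nth)
      then have k2: "k < Suc j - i" "sl xs i j ! k = v" using sl_length[OF a] by auto
      then have "v = xs ! (i+k)" using sl_nth[OF a k2(1)] by simp
      moreover have "i + k \<in> {i..j}" using k2 a by auto
      ultimately show "v \<in> (\<lambda>k. xs!k) ` {i..j}" by blast
    qed
  next
    show "(\<lambda>k. xs!k) ` {i..j} \<subseteq> set (sl xs i j)"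
    proof
      fix v assume "v \<in> (\<lambda>k. xs!k) ` {i..j}"
      then obtain k where k: "i \<le> k" "k \<le> j" "v = xs!k" by auto
      have "sl xs i j ! (k - i) = v" using a k sl_nth[OF a, of "k-i"] by simp
      moreover have "k - i < length (sl xs i j)" using a k sl_length[OF a] by simp
      ultimately show "v \<in> set (sl xs i j)" by (metis nth_mem)
    qed
  qed
qed

lemma sl_hd: "i \<le> j \<Longrightarrow> j < length xs \<Longrightarrow> hd (sl xs i j) = xs ! i"
  by (simp add: sl_def hd_drop_conv_nth)

lemma sl_last: "i \<le> j \<Longrightarrow> j < length xs \<Longrightarrow> last (sl xs i j) = xs ! j"
proof -
  assume a: "i \<le> j" "j < length xs"
  have "sl xs i j \<noteq> []" using a sl_length by fastforce
  then have "last (sl xs i j) = sl xs i j ! (length (sl xs i j) - 1)" by (simp add: last_conv_nth)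
  also have "\<dots> = xs ! j" using a sl_length[OF a] sl_nth[OF a, of "j-i"] by simp
  finally show ?thesis .
qed

lemma sl_distinct: "distinct xs \<Longrightarrow> distinct (sl xs i j)"
  by (simp add: sl_def)

lemma sl_walk: assumes w: "is_walk E xs" and a: "i \<le> j" "j < length xs" shows "is_walk E (sl xs i j)"
  unfolding is_walk_nth
proof (intro conjI allI impI)
  show "sl xs i j \<noteq> []" using sl_length[OF a] a by auto
next
  fix k assume k: "Suc k < length (sl xs i j)"
  then have k2: "Suc k < Suc j - i" using sl_length[OF a] by simp
  have "sl xs i j ! k = xs ! (i+k)" "sl xs i j ! Suc k = xs ! Suc (i+k)"
    using sl_nth[OF a, of k] sl_nth[OF a, of "Suc k"] k2 by auto
  moreover have "Suc (i+k) < length xs" using k2 a by linarith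
  ultimately show "(sl xs i j ! k, sl xs i j ! Suc k) \<in> E" using w unfolding is_walk_nth by simp
qed

lemma sl_path: "is_walk E xs \<Longrightarrow> distinct xs \<Longrightarrow> i \<le> j \<Longrightarrow> j < length xs \<Longrightarrow> is_path E (xs!i) (xs!j) (sl xs i j)"
  unfolding is_path_def by (simp add: sl_walk sl_distinct sl_hd sl_last)

lemma walk_append: "is_walk E xs \<Longrightarrow> is_walk E ys \<Longrightarrow> (last xs, hd ys) \<in> E \<Longrightarrow> is_walk E (xs @ ys)"
proof (induction E xs rule: is_walk.induct)
  case (2 E v) then show ?case by (cases ys) auto
qed auto

lemma walk_mono: "is_walk E xs \<Longrightarrow> E \<subseteq> F \<Longrightarrow> is_walk F xs"
  by (induction E xs rule: is_walk.induct) auto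



definition D :: "'a list \<Rightarrow> 'a list \<Rightarrow> bool" where
  "D X Y \<longleftrightarrow> set X \<inter> set Y \<subseteq> endpoints X \<inter> endpoints Y"

lemma D_sym: "D X Y \<Longrightarrow> D Y X"
  unfolding D_def by blast

lemma wheat_intro:
  assumes "s' \<in> V" "u' \<in> V" "v' \<in> V" "t' \<in> V" "distinct [s', u', v', t']"
    "is_path E s' u' P1" "is_path E s' v' P2" "is_path E u' v' P3"
    "is_path E u' t' P4" "is_path E v' t' P5"
    "D P1 P2" "D P1 P3" "D P1 P4" "D P1 P5" "D P2 P3" "D P2 P4" "D P2 P5"
    "D P3 P4" "D P3 P5" "D P4 P5"
  shows "contains_wheatstone V E"
proof -
  have "\<forall>P\<in>{P1, P2, P3, P4, P5}. \<forall>Q\<in>{P1, P2, P3, P4, P5}. P \<noteq> Q \<longrightarrow> D P Q"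
    using assms(11-20) D_sym by auto
  then show ?thesis unfolding contains_wheatstone_def D_def
    using assms(1-10) by blast
qed

lemma sl_idx:
  assumes "distinct P" "i \<le> j" "j < length P" "m < length P" "P!m \<in> set (sl P i j)"
  shows "i \<le> m \<and> m \<le> j"
proof -
  obtain k where k: "k \<in> {i..j}" "P!m = P!k" using assms sl_set by (metis imageE)
  then have "m = k" using assms nth_eq_iff_index_eq by (metis atLeastAtMost_iff le_less_trans)
  then show ?thesis using k by auto
qed

lemma sl_endpoints: "i \<le> j \<Longrightarrow> j < length P \<Longrightarrow> endpoints (sl P i j) = {P!i, P!j}"
  unfolding endpoints_def by (simp add: sl_hd sl_last)

lemma sl_subset: "i \<le> j \<Longrightarrow> j < length P \<Longrightarrow> set (sl P i j) \<subseteq> set P"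
  using sl_set by fastforce

lemma ear_sl:
  assumes "distinct P" "i \<le> j" "j < length P" "a < length P" "b < length P"
    "set F \<inter> set P \<subseteq> {P!a, P!b}"
    "x \<in> set (sl P i j)" "x \<in> set F"
  shows "(x = P!a \<and> i \<le> a \<and> a \<le> j) \<or> (x = P!b \<and> i \<le> b \<and> b \<le> j)"
proof -
  have "x \<in> set P" using assms sl_subset by blast
  then have "x = P!a \<or> x = P!b" using assms by blast
  then show ?thesis using sl_idx[OF assms(1-3)] assms by blast
qed

lemma sl_sl:
  assumes "distinct P" "i \<le> j" "j < length P" "i' \<le> j'" "j' < length P"
    "x \<in> set (sl P i j)" "x \<in> set (sl P i' j')"
  shows "\<exists>m. x = P!m \<and> i \<le> m \<and> m \<le> j \<and> i' \<le> m \<and> m \<le> j'"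
proof -
  obtain m where m: "m \<in> {i..j}" "x = P!m" using assms sl_set by (metis imageE)
  then have "i' \<le> m \<and> m \<le> j'" using sl_idx[OF assms(1,4,5)] assms by auto
  then show ?thesis using m by auto
qed

lemma walk_V:
  assumes "E \<subseteq> V \<times> V" "is_walk E P" "2 \<le> length P" "k < length P"
  shows "P!k \<in> V"
proof (cases "Suc k < length P")
  case True
  then have "(P!k, P!Suc k) \<in> E" using assms is_walk_nth by blast
  then show ?thesis using assms by auto
next
  case False
  then have "k = Suc (k - 1)" "Suc (k-1) < length P" using assms by auto
  then have "(P!(k-1), P!k) \<in> E" using assms is_walk_nth by metis
  then show ?thesis using assms by auto
qed

lemma crossing:
  assumes st: "E \<subseteq> V \<times> V"
    and P: "is_walk E P" "distinct P"
    and idx: "pa < pc" "pc < pb" "pb < pe" "pe < length P"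
    and F: "is_path E (P!pa) (P!pb) F" "set F \<inter> set P \<subseteq> {P!pa, P!pb}"
    and G: "is_path E (P!pc) (P!pe) G" "set G \<inter> set P \<subseteq> {P!pc, P!pe}"
    and FG: "set F \<inter> set G = {}"
  shows "contains_wheatstone V E"
proof -
  define P1 where "P1 = sl P pa pc"
  define P3 where "P3 = sl P pc pb"
  define P5 where "P5 = sl P pb pe"
  have l: "pa < length P" "pb < length P" "pc < length P" using idx by auto
  have eF: "endpoints F = {P!pa, P!pb}" using F unfolding is_path_def endpoints_def by auto
  have eG: "endpoints G = {P!pc, P!pe}" using G unfolding is_path_def endpoints_def by auto
  have e1: "endpoints P1 = {P!pa, P!pc}" unfolding P1_def using idx by (simp add: sl_endpoints)
  have e3: "endpoints P3 = {P!pc, P!pb}" unfolding P3_def using idx by (simp add: sl_endpoints)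
  have e5: "endpoints P5 = {P!pb, P!pe}" unfolding P5_def using idx by (simp add: sl_endpoints)
  have d12: "D P1 F" unfolding D_def e1 eF
  proof
    fix x assume "x \<in> set P1 \<inter> set F"
    then show "x \<in> {P!pa, P!pc} \<inter> {P!pa, P!pb}"
      using ear_sl[OF P(2) _ _ l(1) l(2) F(2), of pa pc x] idx unfolding P1_def by auto
  qed
  have d13: "D P1 P3" unfolding D_def e1 e3
  proof
    fix x assume "x \<in> set P1 \<inter> set P3"
    then obtain m where "x = P!m" "pa \<le> m" "m \<le> pc" "pc \<le> m" "m \<le> pb"
      using sl_sl[OF P(2), of pa pc pc pb x] idx unfolding P1_def P3_def by auto
    then show "x \<in> {P!pa, P!pc} \<inter> {P!pc, P!pb}" by auto
  qed
  have d14: "D P1 G" unfolding D_def e1 eG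
  proof
    fix x assume "x \<in> set P1 \<inter> set G"
    then show "x \<in> {P!pa, P!pc} \<inter> {P!pc, P!pe}"
      using ear_sl[OF P(2) _ _ l(3) idx(4) G(2), of pa pc x] idx unfolding P1_def by auto
  qed
  have d15: "D P1 P5" unfolding D_def e1 e5
  proof
    fix x assume "x \<in> set P1 \<inter> set P5"
    then obtain m where "x = P!m" "pa \<le> m" "m \<le> pc" "pb \<le> m" "m \<le> pe"
      using sl_sl[OF P(2), of pa pc pb pe x] idx unfolding P1_def P5_def by auto
    then show "x \<in> {P!pa, P!pc} \<inter> {P!pb, P!pe}" using idx by auto
  qed
  have d23: "D F P3" unfolding D_def eF e3
  proof
    fix x assume "x \<in> set F \<inter> set P3"
    then show "x \<in> {P!pa, P!pb} \<inter> {P!pc, P!pb}"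
      using ear_sl[OF P(2) _ _ l(1) l(2) F(2), of pc pb x] idx unfolding P3_def by auto
  qed
  have d24: "D F G" unfolding D_def using FG by auto
  have d25: "D F P5" unfolding D_def eF e5
  proof
    fix x assume "x \<in> set F \<inter> set P5"
    then show "x \<in> {P!pa, P!pb} \<inter> {P!pb, P!pe}"
      using ear_sl[OF P(2) _ _ l(1) l(2) F(2), of pb pe x] idx unfolding P5_def by auto
  qed
  have d34: "D P3 G" unfolding D_def e3 eG
  proof
    fix x assume "x \<in> set P3 \<inter> set G"
    then show "x \<in> {P!pc, P!pb} \<inter> {P!pc, P!pe}"
      using ear_sl[OF P(2) _ _ l(3) idx(4) G(2), of pc pb x] idx unfolding P3_def by auto
  qed
  have d35: "D P3 P5" unfolding D_def e3 e5
  proof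
    fix x assume "x \<in> set P3 \<inter> set P5"
    then obtain m where "x = P!m" "pc \<le> m" "m \<le> pb" "pb \<le> m" "m \<le> pe"
      using sl_sl[OF P(2), of pc pb pb pe x] idx unfolding P3_def P5_def by auto
    then show "x \<in> {P!pc, P!pb} \<inter> {P!pb, P!pe}" by auto
  qed
  have d45: "D G P5" unfolding D_def eG e5
  proof
    fix x assume "x \<in> set G \<inter> set P5"
    then show "x \<in> {P!pc, P!pe} \<inter> {P!pb, P!pe}"
      using ear_sl[OF P(2) _ _ l(3) idx(4) G(2), of pb pe x] idx unfolding P5_def by auto
  qed
  have len2: "2 \<le> length P" using idx by auto
  have V: "P!pa \<in> V" "P!pc \<in> V" "P!pb \<in> V" "P!pe \<in> V"
    using walk_V[OF st P(1) len2] idx by auto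
  have dist: "distinct [P!pa, P!pc, P!pb, P!pe]"
    using P(2) idx by (auto simp: nth_eq_iff_index_eq)
  have p1: "is_path E (P!pa) (P!pc) P1" unfolding P1_def using sl_path[OF P] idx by auto
  have p3: "is_path E (P!pc) (P!pb) P3" unfolding P3_def using sl_path[OF P] idx by auto
  have p5: "is_path E (P!pb) (P!pe) P5" unfolding P5_def using sl_path[OF P] idx by auto
  show ?thesis
    by (rule wheat_intro[OF V dist p1 F(1) p3 G(1) p5 d12 d13 d14 d15 d23 d24 d25 d34 d35 d45])
qed



lemma ivt:
  fixes g :: "nat \<Rightarrow> nat" and I :: "nat \<Rightarrow> bool"
  shows "i < j \<Longrightarrow> I i \<Longrightarrow> I j \<Longrightarrow> g i < p \<Longrightarrow> p \<le> g j \<Longrightarrow>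
    \<exists>i' j'. i \<le> i' \<and> i' < j' \<and> j' \<le> j \<and> I i' \<and> I j' \<and> (\<forall>k. i' < k \<and> k < j' \<longrightarrow> \<not> I k)
       \<and> g i' < p \<and> p \<le> g j'"
proof (induction j rule: less_induct)
  case (less j)
  define j0 where "j0 = (GREATEST k. i \<le> k \<and> k < j \<and> I k)"
  have ex: "i \<le> i \<and> i < j \<and> I i" using less by auto
  have bnd: "\<forall>y. i \<le> y \<and> y < j \<and> I y \<longrightarrow> y \<le> j" by auto
  have j0: "i \<le> j0 \<and> j0 < j \<and> I j0" unfolding j0_def
    by (rule GreatestI_nat[where P="\<lambda>k. i \<le> k \<and> k < j \<and> I k" and k=i and b=j]) (use ex in auto)
  have j0max: "\<And>k. i \<le> k \<Longrightarrow> k < j \<Longrightarrow> I k \<Longrightarrow> k \<le> j0" unfolding j0_def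
    by (rule Greatest_le_nat[where P="\<lambda>k. i \<le> k \<and> k < j \<and> I k" and b=j]) auto
  show ?case
  proof (cases "g j0 < p")
    case True
    have "\<forall>k. j0 < k \<and> k < j \<longrightarrow> \<not> I k"
    proof (intro allI impI notI)
      fix k assume k: "j0 < k \<and> k < j" "I k"
      then have "k \<le> j0" using j0max[of k] j0 by auto
      then show False using k by auto
    qed
    then show ?thesis using True j0 less by blast
  next
    case False
    then have "i < j0" using j0 less by (metis le_neq_implies_less not_le)
    have "\<exists>i' j'. i \<le> i' \<and> i' < j' \<and> j' \<le> j0 \<and> I i' \<and> I j' \<and> (\<forall>k. i' < k \<and> k < j' \<longrightarrow> \<not> I k)
       \<and> g i' < p \<and> p \<le> g j'"
      by (rule less.IH[of j0]) (use j0 less False \<open>i < j0\<close> in auto)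
    then show ?thesis using j0 by (meson order.trans less_imp_le)
  qed
qed

lemma consistent:
  assumes st: "E \<subseteq> V \<times> V" and nW: "\<not> contains_wheatstone V E"
    and P: "is_path E s t P" and Q: "is_path E s t Q" and st2: "s \<noteq> t"
    and o: "xQ < yQ" "yQ < length Q" "xP < length P" "yP < xP" "Q!xQ = P!xP" "Q!yQ = P!yP"
  shows False
proof -
  define nP where "nP = length P"
  define nQ where "nQ = length Q"
  have Pw: "is_walk E P" "distinct P" "hd P = s" "last P = t" using P unfolding is_path_def by auto
  have Qw: "is_walk E Q" "distinct Q" "hd Q = s" "last Q = t" using Q unfolding is_path_def by auto
  have Pne: "P \<noteq> []" using Pw is_walk_nth by blast
  have Qne: "Q \<noteq> []" using Qw is_walk_nth by blast
  have P0: "P!0 = s" using Pw Pne by (simp add: hd_conv_nth)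
  have Q0: "Q!0 = s" using Qw Qne by (simp add: hd_conv_nth)
  have Pl: "P!(nP - 1) = t" using Pw Pne unfolding nP_def by (simp add: last_conv_nth)
  have Ql: "Q!(nQ - 1) = t" using Qw Qne unfolding nQ_def by (simp add: last_conv_nth)
  have nP: "0 < nP" using Pne nP_def by auto
  have nQ: "0 < nQ" using Qne nQ_def by auto
  define I where "I k \<longleftrightarrow> Q!k \<in> set P" for k
  define g where "g k = (THE p. p < nP \<and> P!p = Q!k)" for k
  have guniq: "\<And>k p. p < nP \<Longrightarrow> P!p = Q!k \<Longrightarrow> g k = p"
  proof -
    fix k p assume a: "p < nP" "P!p = Q!k"
    show "g k = p" unfolding g_def
    proof (rule the_equality)
      show "p < nP \<and> P!p = Q!k" using a by simp
      fix p' assume "p' < nP \<and> P!p' = Q!k"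
      then show "p' = p" using a Pw(2) nP_def nth_eq_iff_index_eq by metis
    qed
  qed
  have gI: "\<And>k. I k \<Longrightarrow> g k < nP \<and> P!(g k) = Q!k"
  proof -
    fix k assume "I k"
    then obtain p where "p < nP" "P!p = Q!k" unfolding I_def nP_def by (metis in_set_conv_nth)
    then show "g k < nP \<and> P!(g k) = Q!k" using guniq by simp
  qed
  have Qinj: "\<And>a b. a < nQ \<Longrightarrow> b < nQ \<Longrightarrow> Q!a = Q!b \<Longrightarrow> a = b"
    using Qw(2) nQ_def nth_eq_iff_index_eq by blast
  define S where "S = {k. k < yQ \<and> I k}"
  have Sfin: "finite S" unfolding S_def by auto
  have xS: "xQ \<in> S" unfolding S_def I_def using o(1,3,5) by (simp add: nth_mem)
  define M where "M = Max (g ` S)"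
  have "M \<in> g ` S" unfolding M_def using Sfin xS by (intro Max_in) auto
  then obtain im where im: "im \<in> S" "g im = M" by auto
  have Mmax: "\<And>k. k \<in> S \<Longrightarrow> g k \<le> M" unfolding M_def using Sfin by auto
  have imI: "I im" "im < yQ" using im unfolding S_def by auto
  have gx: "g xQ = xP" using guniq o nP_def by simp
  have gy: "g yQ = yP" using guniq o nP_def by simp
  have MxP: "xP \<le> M" using Mmax[OF xS] gx by simp
  have yI: "I yQ" unfolding I_def o(6) using o(3,4) by auto
  have yQl: "yQ < nQ - 1"
  proof (rule ccontr)
    assume "\<not> yQ < nQ - 1"
    then have "yQ = nQ - 1" using o nQ_def by auto
    then have "P!yP = P!(nP - 1)" using o Ql Pl by simp
    moreover have "yP < nP" "nP - 1 < nP" using o nP_def nP by auto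
    ultimately have "yP = nP - 1" using Pw(2) nP_def nth_eq_iff_index_eq by metis
    then show False using o nP_def by auto
  qed
  have Ml: "M < nP - 1"
  proof (rule ccontr)
    assume "\<not> M < nP - 1"
    moreover have "M < nP" using gI[OF imI(1)] im by simp
    ultimately have "M = nP - 1" by auto
    then have "Q!im = Q!(nQ - 1)" using gI[OF imI(1)] im Pl Ql by simp
    then have "im = nQ - 1" using Qinj[of im "nQ - 1"] imI yQl by auto
    then show False using imI yQl by auto
  qed
  have tI: "I (nQ - 1)" unfolding I_def Ql Pl[symmetric] using nP nP_def by (simp add: nth_mem)
  have gt: "g (nQ - 1) = nP - 1" using guniq nP Pl Ql by simp
  obtain ic ie where c: "yQ \<le> ic" "ic < ie" "ie \<le> nQ - 1" "I ic" "I ie"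
      "\<forall>k. ic < k \<and> k < ie \<longrightarrow> \<not> I k" "g ic < Suc M" "Suc M \<le> g ie"
    using ivt[of yQ "nQ - 1" I g "Suc M", OF yQl yI tI] gy o MxP Ml gt by auto
  have gicM: "g ic \<noteq> M"
  proof
    assume "g ic = M"
    then have "Q!ic = Q!im" using gI[OF c(4)] gI[OF imI(1)] im by simp
    moreover have "ic < nQ" "im < nQ" using c imI yQl by linarith+
    ultimately have "ic = im" using Qinj[of ic im] by auto
    then show False using c imI by auto
  qed
  define pc where "pc = g ic"
  have pcM: "pc < M" using c gicM pc_def by auto
  have pc0: "0 < pc"
  proof (rule ccontr)
    assume "\<not> 0 < pc"
    then have "Q!ic = Q!0" using gI[OF c(4)] pc_def P0 Q0 by simp
    moreover have "ic < nQ" using c by linarith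
    ultimately have "ic = 0" using Qinj[of ic 0] nQ by auto
    then show False using c o by auto
  qed
  have im0: "0 < im"
  proof (rule ccontr)
    assume "\<not> 0 < im"
    then have "im = 0" by auto
    then have "M = 0" using im guniq nP P0 Q0 by auto
    then show False using MxP o by auto
  qed
  have sI: "I 0" unfolding I_def Q0 P0[symmetric] using nP nP_def by (simp add: nth_mem)
  have g0: "g 0 = 0" using guniq nP P0 Q0 by simp
  obtain i1 i2 where a: "0 \<le> i1" "i1 < i2" "i2 \<le> im" "I i1" "I i2"
      "\<forall>k. i1 < k \<and> k < i2 \<longrightarrow> \<not> I k" "g i1 < pc" "pc \<le> g i2"
    using ivt[of 0 im I g pc, OF im0 sI imI(1)] g0 pc0 im pcM by auto
  have gi2: "g i2 \<noteq> pc"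
  proof
    assume "g i2 = pc"
    then have "Q!i2 = Q!ic" using gI[OF c(4)] gI[OF a(5)] pc_def by simp
    moreover have "ic < nQ" "i2 < nQ" using c a imI yQl by linarith+
    ultimately have "i2 = ic" using Qinj[of i2 ic] by auto
    then show False using c a imI by auto
  qed
  have i2S: "i2 \<in> S" unfolding S_def using a imI by auto
  define pa where "pa = g i1"
  define pb where "pb = g i2"
  define pe where "pe = g ie"
  have ord: "pa < pc" "pc < pb" "pb < pe" "pe < length P"
    using a gi2 Mmax[OF i2S] c gI[OF c(5)] nP_def pa_def pb_def pe_def pc_def by auto
  have ieQ: "ie < length Q" using c nQ nQ_def by auto
  have i2Q: "i2 < length Q" using a imI yQl nQ_def by auto
  have Qa: "Q!i1 = P!pa" "Q!i2 = P!pb" "Q!ic = P!pc" "Q!ie = P!pe"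
    using gI a c pa_def pb_def pc_def pe_def by auto
  define F where "F = sl Q i1 i2"
  define G where "G = sl Q ic ie"
  have Fp: "is_path E (P!pa) (P!pb) F" unfolding F_def using sl_path[OF Qw(1,2), of i1 i2] a i2Q Qa by auto
  have Gp: "is_path E (P!pc) (P!pe) G" unfolding G_def using sl_path[OF Qw(1,2), of ic ie] c ieQ Qa by auto
  have FP: "set F \<inter> set P \<subseteq> {P!pa, P!pb}"
  proof
    fix x assume x: "x \<in> set F \<inter> set P"
    then obtain k where k: "k \<in> {i1..i2}" "x = Q!k" unfolding F_def using sl_set[of i1 i2 Q] a i2Q by auto
    have "I k" using x k unfolding I_def by auto
    have "k = i1 \<or> k = i2"
    proof (rule ccontr)
      assume "\<not> (k = i1 \<or> k = i2)"
      then have "i1 < k \<and> k < i2" using k by auto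
      then show False using a(6) \<open>I k\<close> by blast
    qed
    then show "x \<in> {P!pa, P!pb}" using k Qa by auto
  qed
  have GP: "set G \<inter> set P \<subseteq> {P!pc, P!pe}"
  proof
    fix x assume x: "x \<in> set G \<inter> set P"
    then obtain k where k: "k \<in> {ic..ie}" "x = Q!k" unfolding G_def using sl_set[of ic ie Q] c ieQ by auto
    have "I k" using x k unfolding I_def by auto
    have "k = ic \<or> k = ie"
    proof (rule ccontr)
      assume "\<not> (k = ic \<or> k = ie)"
      then have "ic < k \<and> k < ie" using k by auto
      then show False using c(6) \<open>I k\<close> by blast
    qed
    then show "x \<in> {P!pc, P!pe}" using k Qa by auto
  qed
  have FG: "set F \<inter> set G = {}"
  proof (rule ccontr)
    assume "set F \<inter> set G \<noteq> {}"
    then obtain x where "x \<in> set F" "x \<in> set G" by auto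
    then obtain m where "i1 \<le> m" "m \<le> i2" "ic \<le> m"
      using sl_sl[OF Qw(2), of i1 i2 ic ie x] a c i2Q ieQ unfolding F_def G_def by auto
    then show False using a c imI by auto
  qed
  have "contains_wheatstone V E"
    by (rule crossing[OF st Pw(1,2) ord Fp FP Gp GP FG])
  then show False using nW by simp
qed



lemma used_edge:
  assumes "PathA (E - {e}) s t \<noteq> PathA E s t"
  shows "\<exists>P idx. is_path E s t P \<and> Suc idx < length P \<and> P!idx = fst e \<and> P!Suc idx = snd e"
proof -
  have sub: "PathA (E - {e}) s t \<subseteq> PathA E s t"
    unfolding PathA_def is_path_def using walk_mono[of "E - {e}" _ E] by auto
  then obtain P where P: "P \<in> PathA E s t" "P \<notin> PathA (E - {e}) s t" using assms by auto
  then have "is_path E s t P" "\<not> is_walk (E - {e}) P" unfolding PathA_def is_path_def by auto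
  then obtain k where k: "Suc k < length P" "(P!k, P!Suc k) \<notin> E - {e}"
    unfolding is_walk_nth is_path_def by auto
  moreover have "(P!k, P!Suc k) \<in> E" using \<open>is_path E s t P\<close> k(1) unfolding is_path_def is_walk_nth by auto
  ultimately have "(P!k, P!Suc k) = e" by auto
  then show ?thesis using \<open>is_path E s t P\<close> k(1) by (metis fst_conv snd_conv)
qed

lemma extend:
  assumes st: "E \<subseteq> V \<times> V" and nW: "\<not> contains_wheatstone V E" and st2: "s \<noteq> t"
    and P: "is_path E s t P" "a < b" "b < length P"
    and Q: "is_path E s t Q" "Suc q < length Q" "Q!q = P!b"
  shows "\<exists>R. is_path E s t R \<and> Suc b < length R \<and> R!a = P!a \<and> R!Suc b = Q!Suc q"
proof -
  have Pw: "is_walk E P" "distinct P" "hd P = s" "last P = t" using P unfolding is_path_def by auto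
  have Qw: "is_walk E Q" "distinct Q" "hd Q = s" "last Q = t" using Q unfolding is_path_def by auto
  define nQ where "nQ = length Q"
  define A where "A = sl P 0 b"
  define B where "B = sl Q (Suc q) (nQ - 1)"
  have Aw: "is_walk E A" unfolding A_def using sl_walk[OF Pw(1), of 0 b] P by auto
  have Bw: "is_walk E B" unfolding B_def using sl_walk[OF Qw(1), of "Suc q" "nQ - 1"] Q nQ_def by auto
  have lA: "last A = P!b" unfolding A_def using sl_last[of 0 b P] P by auto
  have hB: "hd B = Q!Suc q" unfolding B_def using sl_hd[of "Suc q" "nQ - 1" Q] Q nQ_def by auto
  have hA: "hd A = P!0" unfolding A_def using sl_hd[of 0 b P] P by auto
  have lB: "last B = Q!(nQ - 1)" unfolding B_def using sl_last[of "Suc q" "nQ - 1" Q] Q nQ_def by auto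
  have edge: "(Q!q, Q!Suc q) \<in> E" using Qw(1) Q unfolding is_walk_nth by auto
  have Rw: "is_walk E (A @ B)" using walk_append[OF Aw Bw] lA hB edge Q by simp
  have dA: "distinct A" "distinct B" unfolding A_def B_def using sl_distinct Pw Qw by auto
  have disj: "set A \<inter> set B = {}"
  proof (rule ccontr)
    assume "set A \<inter> set B \<noteq> {}"
    then obtain x where x: "x \<in> set A" "x \<in> set B" by auto
    obtain m where m: "m \<in> {0..b}" "x = P!m" using x(1) sl_set[of 0 b P] P unfolding A_def by auto
    obtain m' where m': "m' \<in> {Suc q..nQ - 1}" "x = Q!m'" using x(2) sl_set[of "Suc q" "nQ - 1" Q] Q nQ_def unfolding B_def by auto
    have m'l: "m' < length Q" using m' Q nQ_def by auto
    show False
    proof (cases "m = b")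
      case True
      then have "Q!m' = Q!q" using m m' Q by simp
      then have "m' = q" using Qw(2) m'l Q nth_eq_iff_index_eq by (metis Suc_lessD)
      then show False using m' by auto
    next
      case False
      then have "m < b" using m by auto
      show False
        by (rule consistent[OF st nW P(1) Q(1) st2, of q m' b m]) (use m m' m'l Q P \<open>m < b\<close> in auto)
    qed
  qed
  have Rd: "distinct (A @ B)" using dA disj by simp
  have lenA: "length A = Suc b" unfolding A_def using sl_length[of 0 b P] P by auto
  have Bne: "B \<noteq> []" using Bw is_walk_nth by blast
  have Ane: "A \<noteq> []" using lenA by auto
  have P0: "P!0 = s" using Pw P by (metis hd_conv_nth less_zeroE list.size(3))
  have Ql: "Q!(nQ - 1) = t" using Qw Q nQ_def by (metis last_conv_nth less_zeroE list.size(3))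
  have Rp: "is_path E s t (A @ B)" unfolding is_path_def using Rw Rd hA lB Ane Bne P0 Ql by simp
  have B0: "B!0 = Q!Suc q" using hB Bne by (simp add: hd_conv_nth)
  have Aa: "A!a = P!a" unfolding A_def using sl_nth[of 0 b P a] P by auto
  have "(A @ B)!a = P!a" using Aa lenA P by (simp add: nth_append)
  moreover have "(A @ B)!Suc b = Q!Suc q" using B0 lenA by (simp add: nth_append)
  moreover have "Suc b < length (A @ B)" using lenA Bne by simp
  ultimately show ?thesis using Rp by blast
qed



theorem lemma3:
  fixes V :: "'a set" and E :: "('a \<times> 'a) set" and s t :: 'a and C :: "'a list"
  assumes "st_graph V E s t"
    and "\<not> contains_wheatstone V E"
    and "simple_cycle E C"
  shows "\<exists>e\<in>cycle_edges C. PathA (E - {e}) s t = PathA E s t"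
proof (rule ccontr)
  assume neg: "\<not> (\<exists>e\<in>cycle_edges C. PathA (E - {e}) s t = PathA E s t)"
  have st: "E \<subseteq> V \<times> V" and st2: "s \<noteq> t" using assms(1) unfolding st_graph_def by auto
  have nW: "\<not> contains_wheatstone V E" by fact
  define k where "k = length C"
  have k2: "2 \<le> k" using assms(3) unfolding simple_cycle_def k_def by auto
  have used: "\<exists>P idx. is_path E s t P \<and> Suc idx < length P \<and> P!idx = C!i \<and> P!Suc idx = C!(Suc i mod k)"
    if "i < k" for i
  proof -
    have "(C!i, C!(Suc i mod k)) \<in> cycle_edges C" unfolding cycle_edges_def k_def using that k_def by auto
    then have "PathA (E - {(C!i, C!(Suc i mod k))}) s t \<noteq> PathA E s t" using neg by auto
    from used_edge[OF this] show ?thesis by simp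
  qed
  have chain: "1 \<le> j \<Longrightarrow> j < k \<Longrightarrow> \<exists>P a b. is_path E s t P \<and> a < b \<and> b < length P \<and> P!a = C!0 \<and> P!b = C!j" for j
  proof (induction j)
    case 0 then show ?case by simp
  next
    case (Suc j)
    show ?case
    proof (cases "j = 0")
      case True
      have "Suc 0 mod k = 1" using k2 by simp
      then obtain P idx where "is_path E s t P" "Suc idx < length P" "P!idx = C!0" "P!Suc idx = C!1"
        using used[of 0] k2 by auto
      then show ?thesis using True by (metis One_nat_def lessI)
    next
      case False
      then obtain P a b where P: "is_path E s t P" "a < b" "b < length P" "P!a = C!0" "P!b = C!j"
        using Suc by auto
      have "Suc j mod k = Suc j" using Suc by simp
      then obtain Q q where Q: "is_path E s t Q" "Suc q < length Q" "Q!q = C!j" "Q!Suc q = C!Suc j"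
        using used[of j] Suc by auto
      obtain R where R: "is_path E s t R" "Suc b < length R" "R!a = P!a" "R!Suc b = Q!Suc q"
        using extend[OF st nW st2 P(1-3) Q(1,2)] Q(3) P(5) by auto
      show ?thesis using R P Q by (metis less_SucI)
    qed
  qed
  obtain P a b where P: "is_path E s t P" "a < b" "b < length P" "P!a = C!0" "P!b = C!(k-1)"
  proof -
    have "1 \<le> k - 1" "k - 1 < k" using k2 by auto
    then show ?thesis using chain[of "k - 1"] that by blast
  qed
  have "Suc (k - 1) mod k = 0" using k2 by simp
  then obtain Q q where Q: "is_path E s t Q" "Suc q < length Q" "Q!q = C!(k-1)" "Q!Suc q = C!0"
    using used[of "k - 1"] k2 by auto
  show False
    by (rule consistent[OF st nW P(1) Q(1) st2, of q "Suc q" b a]) (use P Q in auto)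
qed

end
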